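(* Let $K$ be a field and let $T$ be a tree with at least two edges. Then there is a monomial order such that the cut ideal $I_T$ has a quadratic squarefree Gröbner basis. In particular, the corresponding initial ideal is squarefree.
   Context: For a finite simple graph $G$ with vertex set $V(G)$ and edge set $E(G)$, an unordered partition $A|B$ of $V(G)$ (into two sets, one of which may be empty) defines the cut $Cut(A|B)$, the set of edges with one endpoint in $A$ and the other in $B$. The cut ideal $I_G$ is the kernel of the $K$-algebra homomorphism $\phi_G: K[q_{A|B} : A|B \text{ unordered partition of } V(G)] \to K[s_{ij}, t_{ij} : \{i,j\} \in E(G)]$, $q_{A|B} \mapsto \prod_{\{i,j\}\in Cut(A|B)} s_{ij} \prod_{\{i,j\}\in E(G)\setminus Cut(A|B)} t_{ij}$. A squarefree Gröbner basis is a Gröbner basis consisting of binomials, each a difference of two squarefree monomials; quadratic means each binomial has degree two. *)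

theory Defs
  imports Main "HOL-Library.Poly_Mapping"
begin

definition simple_graph :: "'a set \<Rightarrow> 'a set set \<Rightarrow> bool" where
  "simple_graph V E \<longleftrightarrow> finite V \<and>
     (\<forall>e\<in>E. \<exists>u v. u \<noteq> v \<and> u \<in> V \<and> v \<in> V \<and> e = {u, v})"

definition adj :: "'a set set \<Rightarrow> 'a \<Rightarrow> 'a \<Rightarrow> bool" where
  "adj E u v \<longleftrightarrow> {u, v} \<in> E"

definition graph_connected :: "'a set \<Rightarrow> 'a set set \<Rightarrow> bool" where
  "graph_connected V E \<longleftrightarrow>
     (\<forall>u\<in>V. \<forall>v\<in>V. (u, v) \<in> {(x, y). adj E x y}\<^sup>*)"

definition has_cycle :: "'a set set \<Rightarrow> bool" where
  "has_cycle E \<longleftrightarrow> (\<exists>vs. length vs \<ge> 3 \<and> distinct vs \<and>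
      (\<forall>i. Suc i < length vs \<longrightarrow> adj E (vs ! i) (vs ! Suc i)) \<and>
      adj E (last vs) (hd vs))"

definition is_tree :: "'a set \<Rightarrow> 'a set set \<Rightarrow> bool" where
  "is_tree V E \<longleftrightarrow> simple_graph V E \<and> V \<noteq> {} \<and> graph_connected V E \<and> \<not> has_cycle E"

text \<open>The unordered partition A|B of V (B = V - A, one part possibly empty)
  is represented by the set {A, B}.\<close>
definition unordered_partitions :: "'a set \<Rightarrow> 'a set set set" where
  "unordered_partitions V = {{A, V - A} | A. A \<subseteq> V}"

definition cut_edges :: "'a set set \<Rightarrow> 'a set set \<Rightarrow> 'a set set" where
  "cut_edges E P = {e \<in> E. \<forall>X\<in>P. e \<inter> X \<noteq> {}}"

type_synonym ('v, 'k) mpoly = "('v \<Rightarrow>\<^sub>0 nat) \<Rightarrow>\<^sub>0 'k"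

definition monom :: "('v \<Rightarrow>\<^sub>0 nat) \<Rightarrow> ('v, 'k::comm_ring_1) mpoly" where
  "monom m = Poly_Mapping.single m 1"

definition const :: "'k \<Rightarrow> ('v, 'k::comm_ring_1) mpoly" where
  "const c = Poly_Mapping.single 0 c"

definition poly_ring :: "'v set \<Rightarrow> ('v, 'k::comm_ring_1) mpoly set" where
  "poly_ring Q = {p. \<forall>m\<in>Poly_Mapping.keys p. Poly_Mapping.keys m \<subseteq> Q}"

definition ideal_gen :: "'r::comm_ring_1 set \<Rightarrow> 'r set" where
  "ideal_gen S = {p. \<exists>F c. finite F \<and> F \<subseteq> S \<and> p = (\<Sum>g\<in>F. c g * g)}"

definition squarefree_monomial :: "('v \<Rightarrow>\<^sub>0 nat) \<Rightarrow> bool" where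
  "squarefree_monomial m \<longleftrightarrow> (\<forall>x. Poly_Mapping.lookup m x \<le> 1)"

definition monomial_degree :: "('v \<Rightarrow>\<^sub>0 nat) \<Rightarrow> nat" where
  "monomial_degree m = (\<Sum>x\<in>Poly_Mapping.keys m. Poly_Mapping.lookup m x)"

definition monomial_order_on :: "'v set \<Rightarrow> (('v \<Rightarrow>\<^sub>0 nat) \<Rightarrow> ('v \<Rightarrow>\<^sub>0 nat) \<Rightarrow> bool) \<Rightarrow> bool" where
  "monomial_order_on Q le \<longleftrightarrow>
     (let M = {m. Poly_Mapping.keys m \<subseteq> Q} in
       (\<forall>a\<in>M. le a a) \<and>
       (\<forall>a\<in>M. \<forall>b\<in>M. le a b \<and> le b a \<longrightarrow> a = b) \<and>
       (\<forall>a\<in>M. \<forall>b\<in>M. \<forall>c\<in>M. le a b \<and> le b c \<longrightarrow> le a c) \<and>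
       (\<forall>a\<in>M. \<forall>b\<in>M. le a b \<or> le b a) \<and>
       (\<forall>a\<in>M. \<forall>b\<in>M. \<forall>c\<in>M. le a b \<longrightarrow> le (a + c) (b + c)) \<and>
       (\<forall>a\<in>M. le 0 a) \<and>
       wf {(a, b). a \<in> M \<and> b \<in> M \<and> le a b \<and> a \<noteq> b})"

definition lead_monom :: "(('v \<Rightarrow>\<^sub>0 nat) \<Rightarrow> ('v \<Rightarrow>\<^sub>0 nat) \<Rightarrow> bool) \<Rightarrow> ('v, 'k::comm_ring_1) mpoly \<Rightarrow> ('v \<Rightarrow>\<^sub>0 nat)" where
  "lead_monom le p = (THE m. m \<in> Poly_Mapping.keys p \<and> (\<forall>m'\<in>Poly_Mapping.keys p. le m' m))"

definition initial_ideal :: "(('v \<Rightarrow>\<^sub>0 nat) \<Rightarrow> ('v \<Rightarrow>\<^sub>0 nat) \<Rightarrow> bool) \<Rightarrow> ('v, 'k::comm_ring_1) mpoly set \<Rightarrow> ('v, 'k) mpoly set" where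
  "initial_ideal le I = ideal_gen {monom (lead_monom le f) | f. f \<in> I \<and> f \<noteq> 0}"

definition groebner_basis :: "(('v \<Rightarrow>\<^sub>0 nat) \<Rightarrow> ('v \<Rightarrow>\<^sub>0 nat) \<Rightarrow> bool) \<Rightarrow> ('v, 'k::comm_ring_1) mpoly set \<Rightarrow> ('v, 'k) mpoly set \<Rightarrow> bool" where
  "groebner_basis le G I \<longleftrightarrow> finite G \<and> G \<subseteq> I \<and>
     ideal_gen {monom (lead_monom le g) | g. g \<in> G \<and> g \<noteq> 0} = initial_ideal le I"

definition quadratic_squarefree_binomials :: "('v, 'k::comm_ring_1) mpoly set \<Rightarrow> bool" where
  "quadratic_squarefree_binomials G \<longleftrightarrow>
     (\<forall>g\<in>G. \<exists>u v. u \<noteq> v \<and> squarefree_monomial u \<and> squarefree_monomial v \<and>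
        monomial_degree u = 2 \<and> monomial_degree v = 2 \<and> g = monom u - monom v)"

definition squarefree_monomial_ideal :: "('v, 'k::comm_ring_1) mpoly set \<Rightarrow> bool" where
  "squarefree_monomial_ideal J \<longleftrightarrow>
     (\<exists>S. (\<forall>m\<in>S. squarefree_monomial m) \<and> J = ideal_gen (monom ` S))"

text \<open>Variables of the target ring: (e, True) is s_e, (e, False) is t_e.
  phi(q_{A|B}) = prod over cut edges of s_e times prod over non-cut edges of t_e.\<close>
definition cut_image :: "'a set set \<Rightarrow> 'a set set \<Rightarrow> ('a set \<times> bool, 'k::comm_ring_1) mpoly" where
  "cut_image E P = monom (\<Sum>e\<in>E. Poly_Mapping.single (e, e \<in> cut_edges E P) 1)"

definition cut_hom :: "'a set set \<Rightarrow> ('a set set, 'k::comm_ring_1) mpoly \<Rightarrow> ('a set \<times> bool, 'k) mpoly" where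
  "cut_hom E p = (\<Sum>m\<in>Poly_Mapping.keys p. const (Poly_Mapping.lookup p m) * (\<Prod>P\<in>Poly_Mapping.keys m. cut_image E P ^ Poly_Mapping.lookup m P))"

definition cut_ideal :: "'a set \<Rightarrow> 'a set set \<Rightarrow> ('a set set, 'k::comm_ring_1) mpoly set" where
  "cut_ideal V E = {p \<in> poly_ring (unordered_partitions V). cut_hom E p = 0}"

end

theory Submission
  imports Defs "HOL-Library.FuncSet" "HOL-Library.Transitive_Closure_Table"
begin


lemma monom_add: "monom (a + b) = (monom a * monom b :: ('v,'k::comm_ring_1) mpoly)"
  by (simp add: monom_def mult_single)

lemma monom_zero: "monom 0 = (1 :: ('v,'k::comm_ring_1) mpoly)"
  by (simp add: monom_def)

lemma prod_monom: "(\<Prod>i\<in>A. monom (g i)) = (monom (\<Sum>i\<in>A. g i) :: ('v,'k::comm_ring_1) mpoly)"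
proof (cases "finite A")
  case True
  then show ?thesis by (induction A rule: finite_induct) (auto simp: monom_zero monom_add)
next
  case False
  then show ?thesis by (simp add: monom_zero)
qed

lemma monom_pow_sum:
  "(monom (\<Sum>e\<in>E. Poly_Mapping.single (f e) (1::nat)) :: ('v,'k::comm_ring_1) mpoly) ^ k
     = monom (\<Sum>e\<in>E. Poly_Mapping.single (f e) k)"
proof (induction k)
  case 0
  then show ?case by (simp add: monom_zero)
next
  case (Suc k)
  have "(\<Sum>e\<in>E. Poly_Mapping.single (f e) (1::nat)) + (\<Sum>e\<in>E. Poly_Mapping.single (f e) k)
        = (\<Sum>e\<in>E. Poly_Mapping.single (f e) (Suc k))"
    by (simp add: sum.distrib[symmetric] single_add[symmetric])
  then show ?case using Suc by (simp add: monom_add[symmetric])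
qed

definition img0 :: "'a set set \<Rightarrow> ('a set set \<Rightarrow>\<^sub>0 nat) \<Rightarrow> ('a set \<times> bool \<Rightarrow>\<^sub>0 nat)" where
  "img0 E m = (\<Sum>P\<in>Poly_Mapping.keys m. \<Sum>e\<in>E. Poly_Mapping.single (e, e \<in> cut_edges E P) (Poly_Mapping.lookup m P))"

lemma cut_hom_formula:
  "cut_hom E (p :: ('a set set, 'k::comm_ring_1) mpoly) = (\<Sum>m\<in>Poly_Mapping.keys p. Poly_Mapping.single (img0 E m) (Poly_Mapping.lookup p m))"
proof -
  have "\<And>m. (\<Prod>P\<in>Poly_Mapping.keys m. (cut_image E P :: ('a set \<times> bool, 'k) mpoly) ^ Poly_Mapping.lookup m P) = monom (img0 E m)"
    by (simp only: cut_image_def monom_pow_sum prod_monom img0_def)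
  then show ?thesis
    by (simp add: cut_hom_def const_def monom_def mult_single)
qed

lemma lookup_cut_hom:
  "Poly_Mapping.lookup (cut_hom E (p :: ('a set set, 'k::comm_ring_1) mpoly)) w =
     (\<Sum>m\<in>Poly_Mapping.keys p. if img0 E m = w then Poly_Mapping.lookup p m else 0)"
  by (simp add: cut_hom_formula lookup_sum lookup_single when_def)

lemma cut_hom_superset:
  assumes "finite S" "Poly_Mapping.keys p \<subseteq> S"
  shows "cut_hom E (p :: ('a set set, 'k::comm_ring_1) mpoly) = (\<Sum>m\<in>S. Poly_Mapping.single (img0 E m) (Poly_Mapping.lookup p m))"
  unfolding cut_hom_formula
  by (rule sum.mono_neutral_left) (use assms in \<open>auto simp: in_keys_iff\<close>)

lemma ideal_gen_mono: "S \<subseteq> T \<Longrightarrow> ideal_gen S \<subseteq> ideal_gen T"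
  unfolding ideal_gen_def by blast

lemma ideal_gen_base: "g \<in> S \<Longrightarrow> r * g \<in> ideal_gen S"
  unfolding ideal_gen_def
  by (rule CollectI, rule exI[of _ "{g}"], rule exI[of _ "\<lambda>_. r"]) simp

lemma ideal_gen_zero: "0 \<in> ideal_gen S"
  unfolding ideal_gen_def by (rule CollectI, rule exI[of _ "{}"]) simp

lemma ideal_gen_add:
  assumes "p \<in> ideal_gen S" "q \<in> ideal_gen S" shows "p + q \<in> ideal_gen S"
proof -
  obtain F1 c1 where 1: "finite F1" "F1 \<subseteq> S" "p = (\<Sum>g\<in>F1. c1 g * g)" using assms(1) unfolding ideal_gen_def by blast
  obtain F2 c2 where 2: "finite F2" "F2 \<subseteq> S" "q = (\<Sum>g\<in>F2. c2 g * g)" using assms(2) unfolding ideal_gen_def by blast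
  define c where "c g = (if g \<in> F1 then c1 g else 0) + (if g \<in> F2 then c2 g else 0)" for g
  have "(\<Sum>g\<in>F1 \<union> F2. c g * g) = (\<Sum>g\<in>F1 \<union> F2. (if g \<in> F1 then c1 g * g else 0)) + (\<Sum>g\<in>F1 \<union> F2. (if g \<in> F2 then c2 g * g else 0))"
    unfolding sum.distrib[symmetric] by (rule sum.cong) (auto simp: c_def distrib_right)
  also have "(\<Sum>g\<in>F1 \<union> F2. (if g \<in> F1 then c1 g * g else 0)) = p"
    unfolding 1(3) using 1 2 by (intro sum.mono_neutral_cong_right) auto
  also have "(\<Sum>g\<in>F1 \<union> F2. (if g \<in> F2 then c2 g * g else 0)) = q"
    unfolding 2(3) using 1 2 by (intro sum.mono_neutral_cong_right) auto
  finally have "p + q = (\<Sum>g\<in>F1 \<union> F2. c g * g)" by simp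
  then show ?thesis unfolding ideal_gen_def using 1 2 
    by (intro CollectI exI[of _ "F1 \<union> F2"] exI[of _ c]) auto
qed

lemma ideal_gen_mult:
  assumes "p \<in> ideal_gen S" shows "r * p \<in> ideal_gen S"
proof -
  obtain F c where 1: "finite F" "F \<subseteq> S" "p = (\<Sum>g\<in>F. c g * g)" using assms(1) unfolding ideal_gen_def by blast
  have "r * p = (\<Sum>g\<in>F. (r * c g) * g)" using 1 by (simp add: sum_distrib_left mult.assoc)
  then show ?thesis unfolding ideal_gen_def using 1 
    by (intro CollectI exI[of _ F] exI[of _ "\<lambda>g. r * c g"]) auto
qed

lemma ideal_gen_sum:
  assumes "finite F" "\<And>g. g \<in> F \<Longrightarrow> h g \<in> ideal_gen S" shows "(\<Sum>g\<in>F. h g) \<in> ideal_gen S"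
  using assms by (induction F rule: finite_induct) (auto intro: ideal_gen_zero ideal_gen_add)

lemma ideal_gen_subset:
  assumes "T \<subseteq> ideal_gen S" shows "ideal_gen T \<subseteq> ideal_gen S"
proof
  fix p assume "p \<in> ideal_gen T"
  then obtain F c where 1: "finite F" "F \<subseteq> T" "p = (\<Sum>g\<in>F. c g * g)" unfolding ideal_gen_def by blast
  show "p \<in> ideal_gen S" unfolding 1(3)
    by (rule ideal_gen_sum) (use 1 assms in \<open>auto intro: ideal_gen_mult\<close>)
qed




definition wle :: "(nat \<Rightarrow> ('v \<Rightarrow>\<^sub>0 nat) \<Rightarrow> int) \<Rightarrow> ('v \<Rightarrow>\<^sub>0 nat) \<Rightarrow> ('v \<Rightarrow>\<^sub>0 nat) \<Rightarrow> bool" where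
  "wle W a b \<longleftrightarrow> a = b \<or> (\<exists>i. (\<forall>j<i. W j a = W j b) \<and> W i a < W i b)"

lemma wle_refl: "wle W a a" by (simp add: wle_def)

lemma wle_antisym: assumes "wle W a b" "wle W b a" shows "a = b"
proof (rule ccontr)
  assume ne: "a \<noteq> b"
  then obtain i where i: "\<forall>j<i. W j a = W j b" "W i a < W i b" using assms(1) by (auto simp: wle_def)
  obtain k where k: "\<forall>j<k. W j b = W j a" "W k b < W k a" using assms(2) ne by (auto simp: wle_def)
  show False
  proof (cases i k rule: linorder_cases)
    case less then show ?thesis using i k by force
  next
    case equal then show ?thesis using i k by force
  next
    case greater then show ?thesis using i k by force
  qed
qed

lemma wle_trans: assumes "wle W a b" "wle W b c" shows "wle W a c"
proof (cases "a = b \<or> b = c")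
  case True then show ?thesis using assms by auto
next
  case False
  then obtain i where i: "\<forall>j<i. W j a = W j b" "W i a < W i b" using assms(1) by (auto simp: wle_def)
  obtain k where k: "\<forall>j<k. W j b = W j c" "W k b < W k c" using assms(2) False by (auto simp: wle_def)
  show ?thesis
  proof (cases i k rule: linorder_cases)
    case less then have "(\<forall>j<i. W j a = W j c) \<and> W i a < W i c" using i k by force
    then show ?thesis unfolding wle_def by blast
  next
    case equal then have "(\<forall>j<i. W j a = W j c) \<and> W i a < W i c" using i k by force
    then show ?thesis unfolding wle_def by blast
  next
    case greater then have "(\<forall>j<k. W j a = W j c) \<and> W k a < W k c" using i k by force
    then show ?thesis unfolding wle_def by blast
  qed
qed

lemma wle_total: assumes "a \<noteq> b \<Longrightarrow> \<exists>i. W i a \<noteq> W i b" shows "wle W a b \<or> wle W b a"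
proof (cases "a = b")
  case True then show ?thesis by (simp add: wle_def)
next
  case False
  then have ex: "\<exists>i. W i a \<noteq> W i b" using assms by blast
  define i where "i = (LEAST i. W i a \<noteq> W i b)"
  have 1: "W i a \<noteq> W i b" unfolding i_def using LeastI_ex[OF ex] .
  have 2: "\<forall>j<i. W j a = W j b" unfolding i_def using not_less_Least by blast
  show ?thesis
  proof (cases "W i a < W i b")
    case True then show ?thesis using 2 unfolding wle_def by blast
  next
    case False then have "W i b < W i a" using 1 by linarith
    then show ?thesis using 2 unfolding wle_def by (metis)
  qed
qed

lemma wle_add: assumes add: "\<And>i x y. W i (x + y) = W i x + W i y" and "wle W a b"
  shows "wle W (a + c) (b + c)"
  using assms(2) unfolding wle_def add by auto

lemma wle_strictI: "(\<forall>j<i. W j a = W j b) \<Longrightarrow> W i a < W i b \<Longrightarrow> wle W a b \<and> a \<noteq> b"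
  unfolding wle_def by auto

definition Wt :: "'v set \<Rightarrow> (nat \<Rightarrow> 'v) \<Rightarrow> nat \<Rightarrow> ('v \<Rightarrow> int) \<Rightarrow> nat \<Rightarrow> ('v \<Rightarrow>\<^sub>0 nat) \<Rightarrow> int" where
  "Wt Q h n wt i m = (if i = 0 then (\<Sum>q\<in>Q. int (Poly_Mapping.lookup m q))
     else if i = 1 then (\<Sum>q\<in>Q. int (Poly_Mapping.lookup m q) * wt q)
     else if i - 2 < n then int (Poly_Mapping.lookup m (h (i - 2))) else 0)"

lemma Wt_add: "Wt Q h n wt i (x + y) = Wt Q h n wt i x + Wt Q h n wt i y"
  by (simp add: Wt_def lookup_add sum.distrib distrib_right)

lemma finite_bounded_monoms:
  fixes Q :: "'v set"
  assumes "finite Q"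
  shows "finite {a :: 'v \<Rightarrow>\<^sub>0 nat. Poly_Mapping.keys a \<subseteq> Q \<and> (\<Sum>q\<in>Q. Poly_Mapping.lookup a q) \<le> d}"
    (is "finite ?A")
proof -
  let ?f = "\<lambda>a::'v \<Rightarrow>\<^sub>0 nat. restrict (Poly_Mapping.lookup a) Q"
  have "?f ` ?A \<subseteq> PiE Q (\<lambda>_. {..d})"
  proof
    fix x assume "x \<in> ?f ` ?A"
    then obtain a where a: "a \<in> ?A" "x = ?f a" by blast
    have "\<And>q. q \<in> Q \<Longrightarrow> Poly_Mapping.lookup a q \<le> d"
      using a(1) member_le_sum[of _ Q "Poly_Mapping.lookup a"] assms by fastforce
    then show "x \<in> PiE Q (\<lambda>_. {..d})" using a(2) by (simp add: restrict_PiE_iff)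
  qed
  then have "finite (?f ` ?A)" by (rule finite_subset) (intro finite_PiE assms finite_atMost)
  moreover have "inj_on ?f ?A"
  proof
    fix a b assume ab: "a \<in> ?A" "b \<in> ?A" "?f a = ?f b"
    show "a = b"
    proof (rule poly_mapping_eqI)
      fix k show "Poly_Mapping.lookup a k = Poly_Mapping.lookup b k"
      proof (cases "k \<in> Q")
        case True then show ?thesis using ab(3) by (metis restrict_apply')
      next
        case False 
        then have "Poly_Mapping.lookup a k = 0" "Poly_Mapping.lookup b k = 0"
          using ab(1,2) by (metis (no_types, lifting) in_keys_iff mem_Collect_eq subsetD)+
        then show ?thesis by simp
      qed
    qed
  qed
  ultimately show ?thesis by (rule finite_imageD)
qed

lemma wf_locally_finite:
  fixes R :: "('x \<times> 'x) set"
  assumes trans: "trans R" and irr: "\<And>a. (a, a) \<notin> R" and fin: "\<And>b. finite {a. (a, b) \<in> R}"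
  shows "wf R"
proof -
  have "R \<subseteq> inv_image less_than (\<lambda>b. card {a. (a, b) \<in> R})"
  proof
    fix x assume "x \<in> R"
    then obtain a b where x: "x = (a, b)" "(a, b) \<in> R" by (cases x) auto
    have "{c. (c, a) \<in> R} \<subset> {c. (c, b) \<in> R}"
      using x(2) trans irr unfolding trans_def by blast
    then have "card {c. (c, a) \<in> R} < card {c. (c, b) \<in> R}"
      using fin psubset_card_mono by blast
    then show "x \<in> inv_image less_than (\<lambda>b. card {a. (a, b) \<in> R})" using x by simp
  qed
  then show ?thesis using wf_subset wf_inv_image wf_less_than by blast
qed

lemma Wt_order:
  fixes Q :: "'v set"
  assumes fin: "finite Q" and bij: "bij_betw h {0..<n} Q"
  shows "monomial_order_on Q (wle (Wt Q h n wt))"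
proof -
  let ?W = "Wt Q h n wt"
  let ?M = "{m :: 'v \<Rightarrow>\<^sub>0 nat. Poly_Mapping.keys m \<subseteq> Q}"
  have sep: "\<exists>i. ?W i a \<noteq> ?W i b" if ab: "a \<in> ?M" "b \<in> ?M" "a \<noteq> b" for a b
  proof -
    obtain k where k: "Poly_Mapping.lookup a k \<noteq> Poly_Mapping.lookup b k"
      using ab(3) by (metis poly_mapping_eqI)
    then have "k \<in> Q" using ab(1,2) by (metis in_keys_iff subsetD mem_Collect_eq)
    then obtain j where j: "j < n" "h j = k" using bij unfolding bij_betw_def by auto
    have "?W (j + 2) a \<noteq> ?W (j + 2) b" using j k by (simp add: Wt_def)
    then show ?thesis by blast
  qed
  have W0pos: "?W 0 0 < ?W 0 a" if a0: "a \<in> ?M" "a \<noteq> 0" for a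
  proof -
    obtain k where k: "Poly_Mapping.lookup a k \<noteq> 0" using a0(2) poly_mapping_eqI
      by (metis lookup_zero)
    then have "k \<in> Q" using a0(1) by (auto simp: in_keys_iff)
    then have "int (Poly_Mapping.lookup a k) \<le> (\<Sum>q\<in>Q. int (Poly_Mapping.lookup a q))"
      using fin by (intro member_le_sum) auto
    then show ?thesis using k by (simp add: Wt_def)
  qed
  define R where "R = {(a, b). a \<in> ?M \<and> b \<in> ?M \<and> wle ?W a b \<and> a \<noteq> b}"
  have "wf R"
  proof (rule wf_locally_finite)
    show "trans R"
    proof (rule transI)
      fix x y z assume "(x, y) \<in> R" "(y, z) \<in> R"
      then show "(x, z) \<in> R" unfolding R_def using wle_trans[of ?W x y z] wle_antisym[of ?W x y] by auto
    qed
    show "\<And>a. (a, a) \<notin> R" unfolding R_def by blast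
    fix b
    have "{a. (a, b) \<in> R} \<subseteq> {a. Poly_Mapping.keys a \<subseteq> Q \<and> (\<Sum>q\<in>Q. Poly_Mapping.lookup a q) \<le> nat (?W 0 b)}"
    proof
      fix a assume "a \<in> {a. (a, b) \<in> R}"
      then have a: "a \<in> ?M" "wle ?W a b" "a \<noteq> b" unfolding R_def by auto
      then obtain i where i: "\<forall>j<i. ?W j a = ?W j b" "?W i a < ?W i b" unfolding wle_def by blast
      have "?W 0 a \<le> ?W 0 b" using i by (cases i) auto
      then show "a \<in> {a. Poly_Mapping.keys a \<subseteq> Q \<and> (\<Sum>q\<in>Q. Poly_Mapping.lookup a q) \<le> nat (?W 0 b)}"
        using a(1) by (simp add: Wt_def sum_nonneg flip: of_nat_sum) 
    qed
    then show "finite {a. (a, b) \<in> R}" by (rule finite_subset[OF _ finite_bounded_monoms[OF fin]])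
  qed
  have tot: "\<forall>a\<in>?M. \<forall>b\<in>?M. wle ?W a b \<or> wle ?W b a"
  proof (intro ballI)
    fix a b assume "a \<in> ?M" "b \<in> ?M"
    then show "wle ?W a b \<or> wle ?W b a" using sep[of a b] by (intro wle_total) blast
  qed
  have zero: "\<forall>a\<in>?M. wle ?W 0 a"
  proof
    fix a assume a: "a \<in> ?M"
    show "wle ?W 0 a"
    proof (cases "a = 0")
      case True then show ?thesis by (simp add: wle_refl)
    next
      case False then show ?thesis using W0pos[OF a] wle_strictI[of 0 ?W 0 a] by blast
    qed
  qed
  have mono: "\<forall>a\<in>?M. \<forall>b\<in>?M. \<forall>c\<in>?M. wle ?W a b \<longrightarrow> wle ?W (a + c) (b + c)"
  proof (intro ballI impI)
    fix a b c assume "wle ?W a b"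
    moreover have "\<And>i x y. ?W i (x + y) = ?W i x + ?W i y" by (rule Wt_add)
    ultimately show "wle ?W (a + c) (b + c)" using wle_add by blast
  qed
  have refl: "\<forall>a\<in>?M. wle ?W a a" using wle_refl by blast
  have anti: "\<forall>a\<in>?M. \<forall>b\<in>?M. wle ?W a b \<and> wle ?W b a \<longrightarrow> a = b" by (intro ballI impI) (erule conjE, erule (1) wle_antisym)
  have tr: "\<forall>a\<in>?M. \<forall>b\<in>?M. \<forall>c\<in>?M. wle ?W a b \<and> wle ?W b c \<longrightarrow> wle ?W a c" by (intro ballI impI) (erule conjE, erule (1) wle_trans)
  show ?thesis
    unfolding monomial_order_on_def Let_def
    using refl anti tr tot mono zero \<open>wf R\<close> unfolding R_def by (intro conjI) assumption+
qed




definition cutA :: "'a set \<Rightarrow> 'a set set \<Rightarrow> 'a set \<Rightarrow> 'a set set" where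
  "cutA V E A = cut_edges E {A, V - A}"

lemma edge_form: "simple_graph V E \<Longrightarrow> e \<in> E \<Longrightarrow> \<exists>u v. u \<noteq> v \<and> u \<in> V \<and> v \<in> V \<and> e = {u, v}"
  unfolding simple_graph_def by blast

lemma cutA_edge:
  assumes "u \<in> V" "v \<in> V" "{u, v} \<in> E"
  shows "{u, v} \<in> cutA V E A \<longleftrightarrow> (u \<in> A \<longleftrightarrow> v \<notin> A)"
  using assms unfolding cutA_def cut_edges_def by auto

lemma cutA_sub: "cutA V E A \<subseteq> E" unfolding cutA_def cut_edges_def by auto

lemma cutA_symdiff:
  assumes sg: "simple_graph V E"
  shows "cutA V E ((A - B) \<union> (B - A)) = (cutA V E A - cutA V E B) \<union> (cutA V E B - cutA V E A)"
proof (intro set_eqI iffI)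
  fix e assume "e \<in> cutA V E ((A - B) \<union> (B - A))"
  moreover then have "e \<in> E" using cutA_sub by blast
  moreover then obtain u v where "u \<noteq> v" "u \<in> V" "v \<in> V" "e = {u, v}" using edge_form[OF sg] by blast
  ultimately show "e \<in> (cutA V E A - cutA V E B) \<union> (cutA V E B - cutA V E A)"
    using cutA_edge[of u V v E] by auto
next
  fix e assume "e \<in> (cutA V E A - cutA V E B) \<union> (cutA V E B - cutA V E A)"
  moreover then have "e \<in> E" using cutA_sub by blast
  moreover then obtain u v where "u \<noteq> v" "u \<in> V" "v \<in> V" "e = {u, v}" using edge_form[OF sg] by blast
  ultimately show "e \<in> cutA V E ((A - B) \<union> (B - A))"
    using cutA_edge[of u V v E] by auto
qed

lemma path_nth:
  "rtrancl_path r x xs y \<Longrightarrow> Suc i < length (x # xs) \<Longrightarrow> r ((x # xs) ! i) ((x # xs) ! Suc i)"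
proof (induction arbitrary: i rule: rtrancl_path.induct)
  case (base x) then show ?case by simp
next
  case (step x y ys z)
  show ?case
  proof (cases i)
    case 0 then show ?thesis using step by simp
  next
    case (Suc j) then show ?thesis using step by simp
  qed
qed

lemma path_last: "rtrancl_path r x xs y \<Longrightarrow> last (x # xs) = y"
  by (induction rule: rtrancl_path.induct) auto

lemma adj_sym: "adj E x y \<Longrightarrow> adj E y x"
  unfolding adj_def by (simp add: insert_commute)

lemma single_edge_cut:
  assumes tree: "is_tree V E" and e: "e \<in> E"
  shows "\<exists>A \<subseteq> V. cutA V E A = {e}"
proof -
  have sg: "simple_graph V E" using tree unfolding is_tree_def by blast
  obtain u v where uv: "u \<noteq> v" "u \<in> V" "v \<in> V" "e = {u, v}" using edge_form[OF sg e] by blast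
  define r where "r x y \<longleftrightarrow> adj E x y \<and> {x, y} \<noteq> e" for x y
  define A where "A = {x. r\<^sup>*\<^sup>* u x}"
  have adjV: "y \<in> V" if xy: "adj E x y" for x y
  proof -
    obtain a b where "a \<in> V" "b \<in> V" "{x, y} = {a, b}" using xy edge_form[OF sg] unfolding adj_def by blast
    then show ?thesis by (metis doubleton_eq_iff)
  qed
  have AV: "A \<subseteq> V"
  proof
    fix x assume "x \<in> A"
    then have "r\<^sup>*\<^sup>* u x" unfolding A_def by blast
    then show "x \<in> V"
      by (induction rule: rtranclp_induct) (use uv adjV r_def in auto)
  qed
  have vA: "v \<notin> A"
  proof
    assume "v \<in> A"
    then have "r\<^sup>*\<^sup>* u v" unfolding A_def by blast
    then obtain xs where "rtrancl_path r u xs v" using rtranclp_eq_rtrancl_path by metis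
    then obtain ys where ys: "rtrancl_path r u ys v" "distinct (u # ys)"
      using rtrancl_path_distinct by metis
    have "ys \<noteq> []" using ys(1) uv(1) by (cases rule: rtrancl_path.cases) auto
    moreover have "ys \<noteq> [v]"
    proof
      assume "ys = [v]"
      then have "rtrancl_path r u [v] v" using ys(1) by simp
      then have "r u v" by (cases rule: rtrancl_path.cases) auto
      then show False using uv unfolding r_def by simp
    qed
    moreover have "last (u # ys) = v" using path_last[OF ys(1)] .
    ultimately have len: "length (u # ys) \<ge> 3"
    proof (cases ys)
      case (Cons y zs)
      assume "ys \<noteq> [v]" "last (u # ys) = v"
      then show ?thesis using Cons by (cases zs) auto
    qed simp
    have "has_cycle E"
      unfolding has_cycle_def
    proof (intro exI[of _ "u # ys"] conjI allI impI)
      show "3 \<le> length (u # ys)" using len .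
      show "distinct (u # ys)" using ys(2) .
      fix i assume "Suc i < length (u # ys)"
      then show "adj E ((u # ys) ! i) ((u # ys) ! Suc i)" using path_nth[OF ys(1)] r_def by blast
    next
      show "adj E (last (u # ys)) (hd (u # ys))" using \<open>last (u # ys) = v\<close> e uv unfolding adj_def
        by (simp add: insert_commute)
    qed
    then show False using tree unfolding is_tree_def by blast
  qed
  have "cutA V E A = {e}"
  proof (intro set_eqI iffI)
    fix e' assume e': "e' \<in> cutA V E A"
    then have "e' \<in> E" using cutA_sub by blast
    then obtain a b where ab: "a \<noteq> b" "a \<in> V" "b \<in> V" "e' = {a, b}" using edge_form[OF sg] by blast
    show "e' \<in> {e}"
    proof (rule ccontr)
      assume "e' \<notin> {e}"
      then have "r a b" "r b a" using ab \<open>e' \<in> E\<close> unfolding r_def adj_def by (auto simp: insert_commute)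
      then have "a \<in> A \<longleftrightarrow> b \<in> A" unfolding A_def mem_Collect_eq
        by (meson rtranclp.rtrancl_into_rtrancl)
      then show False using e' ab cutA_edge[of a V b E A] \<open>e' \<in> E\<close> by auto
    qed
  next
    fix e' assume "e' \<in> {e}"
    then have "e' = e" by simp
    moreover have "u \<in> A" unfolding A_def by simp
    ultimately show "e' \<in> cutA V E A" using cutA_edge[of u V v E A] uv vA e by auto
  qed
  then show ?thesis using AV by blast
qed

lemma every_subset_cut:
  assumes tree: "is_tree V E" and S: "S \<subseteq> E"
  shows "\<exists>A \<subseteq> V. cutA V E A = S"
proof -
  have sg: "simple_graph V E" using tree unfolding is_tree_def by blast
  have "finite E"
  proof -
    have "E \<subseteq> Pow V"
    proof
      fix e assume "e \<in> E"
      then obtain u v where "u \<in> V" "v \<in> V" "e = {u, v}" using edge_form[OF sg] by metis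
      then show "e \<in> Pow V" by simp
    qed
    moreover have "finite V" using sg unfolding simple_graph_def by simp
    ultimately show ?thesis by (meson finite_Pow_iff finite_subset)
  qed
  then have "finite S" using S by (meson finite_subset)
  then show ?thesis using S
  proof (induction S rule: finite_induct)
    case empty
    have "cutA V E {} = {}" unfolding cutA_def cut_edges_def by auto
    then show ?case by (intro exI[of _ "{}"]) simp
  next
    case (insert e S)
    then have "S \<subseteq> E" by simp
    then obtain A0 where A0: "A0 \<subseteq> V" "cutA V E A0 = S" using insert(3) by metis
    have "e \<in> E" using insert(4) by simp
    then obtain A1 where A1: "A1 \<subseteq> V" "cutA V E A1 = {e}" using single_edge_cut[OF tree] by metis
    have "cutA V E ((A0 - A1) \<union> (A1 - A0)) = insert e S"
      unfolding cutA_symdiff[OF sg] A0(2) A1(2) using insert(2) by blast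
    moreover have "(A0 - A1) \<union> (A1 - A0) \<subseteq> V" using A0 A1 by blast
    ultimately show ?case by (intro exI[of _ "(A0 - A1) \<union> (A1 - A0)"]) simp
  qed
qed

lemma cut_inj:
  assumes tree: "is_tree V E" and A: "A \<subseteq> V" and B: "B \<subseteq> V" and eq: "cutA V E A = cutA V E B"
  shows "{A, V - A} = {B, V - B}"
proof -
  have sg: "simple_graph V E" using tree unfolding is_tree_def by blast
  define D where "D = (A - B) \<union> (B - A)"
  have cD: "cutA V E D = {}" unfolding D_def using cutA_symdiff[OF sg, of A B] eq by simp
  obtain r where r: "r \<in> V" using tree unfolding is_tree_def by blast
  have step: "(y \<in> D) = (z \<in> D)" if yz: "adj E y z" for y z
  proof -
    obtain a b where ab: "a \<noteq> b" "a \<in> V" "b \<in> V" "{y, z} = {a, b}" using yz edge_form[OF sg] unfolding adj_def by blast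
    then have "y \<in> V" "z \<in> V" by (metis doubleton_eq_iff)+
    moreover have "{y, z} \<in> E" using yz unfolding adj_def .
    ultimately have "\<not> (y \<in> D \<longleftrightarrow> z \<notin> D)" using cutA_edge[of y V z E D] cD by simp
    then show ?thesis by blast
  qed
  have same: "x \<in> D \<longleftrightarrow> r \<in> D" if "x \<in> V" for x
  proof -
    have "(r, x) \<in> {(x, y). adj E x y}\<^sup>*" using tree r that unfolding is_tree_def graph_connected_def by blast
    then show ?thesis by (induction rule: rtrancl_induct) (auto dest: step)
  qed
  show ?thesis
  proof (cases "r \<in> D")
    case False
    then have "A = B" using same A B unfolding D_def by blast
    then show ?thesis by simp
  next
    case True
    then have "B = V - A" using same A B unfolding D_def by blast
    then show ?thesis using A by (auto simp: Diff_Diff_Int Int_absorb1)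
  qed
qed




lemma finite_max_nat:
  fixes f :: "'b \<Rightarrow> nat"
  assumes "finite S" "S \<noteq> {}" shows "\<exists>x\<in>S. \<forall>y\<in>S. f y \<le> f x"
proof -
  have "Max (f ` S) \<in> f ` S" using assms by (intro Max_in) auto
  then obtain x where x: "x \<in> S" "f x = Max (f ` S)" by (metis imageE)
  have "\<forall>y\<in>S. f y \<le> f x" using x assms by simp
  then show ?thesis using x(1) by blast
qed

lemma finite_max_rel:
  assumes "finite K" "K \<noteq> {}"
    and tot: "\<And>a b. a \<in> K \<Longrightarrow> b \<in> K \<Longrightarrow> le a b \<or> le b a"
    and tr: "\<And>a b c. le a b \<Longrightarrow> le b c \<Longrightarrow> le a c"
    and rf: "\<And>a. le a a"
  shows "\<exists>m\<in>K. \<forall>m'\<in>K. le m' m"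
  using assms(1,2,3)
proof (induction K rule: finite_ne_induct)
  case (singleton x) then show ?case using rf by simp
next
  case (insert x F)
  then obtain m where m: "m \<in> F" "\<forall>m'\<in>F. le m' m" by blast
  show ?case
  proof (cases "le x m")
    case True then show ?thesis using m by blast
  next
    case False
    then have "le m x" using insert.prems m(1) by blast
    then have "\<forall>m'\<in>insert x F. le m' x" using m(2) tr rf by blast
    then show ?thesis by blast
  qed
qed

lemma decomp_monom:
  assumes "\<And>k. Poly_Mapping.lookup u k \<le> Poly_Mapping.lookup (m :: 'v \<Rightarrow>\<^sub>0 nat) k"
  shows "m = u + (m - u)"
  by (rule poly_mapping_eqI) (use assms in \<open>simp add: lookup_add lookup_minus\<close>)

lemma keys_minus_sub: "Poly_Mapping.keys ((m :: 'v \<Rightarrow>\<^sub>0 nat) - u) \<subseteq> Poly_Mapping.keys m"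
  by (auto simp: in_keys_iff lookup_minus)

lemma keys_two: "Poly_Mapping.keys (Poly_Mapping.single P (1::nat) + Poly_Mapping.single P' 1) \<subseteq> {P, P'}"
  by (auto simp: in_keys_iff lookup_add lookup_single when_def split: if_splits)

locale tree_ctx =
  fixes V :: "'a set" and E :: "'a set set"
  assumes tree: "is_tree V E" and cardE: "card E \<ge> 2"
begin

abbreviation "Q \<equiv> unordered_partitions V"
abbreviation "kap P \<equiv> cut_edges E P"

lemma sg: "simple_graph V E" using tree unfolding is_tree_def by simp

lemma finE: "finite E" using cardE card.infinite by fastforce

lemma E_ne: "\<exists>e. e \<in> E" using cardE by (metis card.empty all_not_in_conv not_numeral_le_zero)

lemma finQ: "finite Q"
proof -
  have "finite V" using sg unfolding simple_graph_def by simp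
  moreover have "Q = (\<lambda>A. {A, V - A}) ` Pow V" unfolding unordered_partitions_def by auto
  ultimately show ?thesis by simp
qed

lemma Q_cutA: "P \<in> Q \<Longrightarrow> \<exists>A. A \<subseteq> V \<and> P = {A, V - A} \<and> kap P = cutA V E A"
  unfolding unordered_partitions_def cutA_def by blast

lemma kap_sub: "kap P \<subseteq> E" unfolding cut_edges_def by auto

lemma kap_inj: assumes "P \<in> Q" "P' \<in> Q" "kap P = kap P'" shows "P = P'"
proof -
  obtain A where A: "A \<subseteq> V" "P = {A, V - A}" "kap P = cutA V E A" using Q_cutA[OF assms(1)] by blast
  obtain B where B: "B \<subseteq> V" "P' = {B, V - B}" "kap P' = cutA V E B" using Q_cutA[OF assms(2)] by blast
  show ?thesis using cut_inj[OF tree A(1) B(1)] A B assms(3) by simp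
qed

lemma kap_surj: assumes "S \<subseteq> E" shows "\<exists>R\<in>Q. kap R = S"
proof -
  obtain A where A: "A \<subseteq> V" "cutA V E A = S" using every_subset_cut[OF tree assms] by blast
  have "{A, V - A} \<in> Q" using A(1) unfolding unordered_partitions_def by blast
  moreover have "kap {A, V - A} = S" using A(2) unfolding cutA_def .
  ultimately show ?thesis by blast
qed

definition sgv :: "'a set set \<Rightarrow> nat \<Rightarrow> ('a set \<times> bool \<Rightarrow>\<^sub>0 nat)" where
  "sgv P s = (\<Sum>e\<in>E. Poly_Mapping.single (e, e \<in> kap P) s)"

definition img :: "('a set set \<Rightarrow>\<^sub>0 nat) \<Rightarrow> ('a set \<times> bool \<Rightarrow>\<^sub>0 nat)" where
  "img m = (\<Sum>P\<in>Q. sgv P (Poly_Mapping.lookup m P))"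

lemma sgv_zero: "sgv P 0 = 0" by (simp add: sgv_def)

lemma img0_img: assumes "Poly_Mapping.keys m \<subseteq> Q" shows "img0 E m = img m"
  unfolding img0_def img_def sgv_def[symmetric]
  by (rule sum.mono_neutral_left) (use assms finQ in \<open>auto simp: in_keys_iff sgv_zero\<close>)

lemma img_add: "img (a + b) = img a + img b"
  by (simp add: img_def sgv_def lookup_add single_add sum.distrib)

lemma img_single: assumes "P \<in> Q" shows "img (Poly_Mapping.single P 1) = sgv P 1"
proof -
  have "img (Poly_Mapping.single P 1) = (\<Sum>P'\<in>Q. if P' = P then sgv P 1 else 0)"
    unfolding img_def by (rule sum.cong) (auto simp: lookup_single when_def sgv_zero)
  also have "\<dots> = sgv P 1" using assms finQ by simp
  finally show ?thesis .
qed

lemma lookup_sgv: "Poly_Mapping.lookup (sgv P s) (e, b) = (if e \<in> E \<and> (e \<in> kap P) = b then s else 0)"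
proof -
  have "Poly_Mapping.lookup (sgv P s) (e, b) = (\<Sum>e'\<in>E. if e' = e then (if (e \<in> kap P) = b then s else 0) else 0)"
    unfolding sgv_def lookup_sum by (rule sum.cong) (auto simp: lookup_single when_def)
  also have "\<dots> = (if e \<in> E \<and> (e \<in> kap P) = b then s else 0)" using finE by simp
  finally show ?thesis .
qed

lemma lookup_img: "e \<in> E \<Longrightarrow> Poly_Mapping.lookup (img m) (e, b) = (\<Sum>P\<in>Q. if (e \<in> kap P) = b then Poly_Mapping.lookup m P else 0)"
  unfolding img_def lookup_sum lookup_sgv by simp

definition deg :: "('a set set \<Rightarrow>\<^sub>0 nat) \<Rightarrow> nat" where
  "deg m = (\<Sum>P\<in>Q. Poly_Mapping.lookup m P)"

lemma deg_img: "e \<in> E \<Longrightarrow> deg m = Poly_Mapping.lookup (img m) (e, True) + Poly_Mapping.lookup (img m) (e, False)"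
  unfolding lookup_img deg_def sum.distrib[symmetric] by (rule sum.cong) auto

lemma deg_add: "deg (a + b) = deg a + deg b"
  by (simp add: deg_def lookup_add sum.distrib)

lemma deg_single: "P \<in> Q \<Longrightarrow> deg (Poly_Mapping.single P 1) = 1"
proof -
  assume P: "P \<in> Q"
  have "deg (Poly_Mapping.single P 1) = (\<Sum>P'\<in>Q. if P' = P then 1 else 0)"
    unfolding deg_def by (rule sum.cong) (auto simp: lookup_single when_def)
  also have "\<dots> = 1" using P finQ by simp
  finally show ?thesis .
qed

lemma deg_zero: assumes "Poly_Mapping.keys m \<subseteq> Q" "deg m = 0" shows "m = 0"
proof (rule poly_mapping_eqI)
  fix k show "Poly_Mapping.lookup m k = Poly_Mapping.lookup 0 k"
  proof (cases "k \<in> Q")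
    case True then show ?thesis using assms(2) finQ unfolding deg_def by simp
  next
    case False then show ?thesis using assms(1) by (auto simp: in_keys_iff)
  qed
qed

definition chain :: "('a set set \<Rightarrow>\<^sub>0 nat) \<Rightarrow> bool" where
  "chain m \<longleftrightarrow> (\<forall>P\<in>Poly_Mapping.keys m. \<forall>P'\<in>Poly_Mapping.keys m. kap P \<subseteq> kap P' \<or> kap P' \<subseteq> kap P)"

lemma chain_top:
  assumes Q: "Poly_Mapping.keys m \<subseteq> Q" and ch: "chain m" and ne: "m \<noteq> 0"
  shows "\<exists>P\<in>Poly_Mapping.keys m. \<forall>e\<in>E. (e \<in> kap P \<longleftrightarrow> Poly_Mapping.lookup (img m) (e, True) > 0)"
proof -
  have "Poly_Mapping.keys m \<noteq> {}" using ne by simp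
  then obtain P where P: "P \<in> Poly_Mapping.keys m" "\<forall>P'\<in>Poly_Mapping.keys m. card (kap P') \<le> card (kap P)"
    using finite_max_nat[of "Poly_Mapping.keys m" "\<lambda>P. card (kap P)"] by auto
  have sub: "kap P' \<subseteq> kap P" if "P' \<in> Poly_Mapping.keys m" for P'
  proof -
    have "kap P \<subseteq> kap P' \<or> kap P' \<subseteq> kap P" using ch P(1) that unfolding chain_def by blast
    moreover have fin: "finite (kap P')" using finite_subset[OF kap_sub finE] .
    moreover have "card (kap P') \<le> card (kap P)" using P(2) that by blast
    ultimately show ?thesis using card_seteq[OF fin] by blast
  qed
  have "\<forall>e\<in>E. (e \<in> kap P \<longleftrightarrow> Poly_Mapping.lookup (img m) (e, True) > 0)"
  proof (intro ballI iffI)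
    fix e assume e: "e \<in> E" "e \<in> kap P"
    have "Poly_Mapping.lookup m P \<le> (\<Sum>P'\<in>Q. if e \<in> kap P' then Poly_Mapping.lookup m P' else 0)"
      using member_le_sum[of P Q "\<lambda>P'. if e \<in> kap P' then Poly_Mapping.lookup m P' else 0"] e finQ P(1) Q
      by auto
    moreover have "Poly_Mapping.lookup m P > 0" using P(1) by (simp add: in_keys_iff)
    ultimately show "Poly_Mapping.lookup (img m) (e, True) > 0" using lookup_img[OF e(1)] by simp
  next
    fix e assume e: "e \<in> E" "Poly_Mapping.lookup (img m) (e, True) > 0"
    then have ne0: "(\<Sum>P'\<in>Q. if e \<in> kap P' then Poly_Mapping.lookup m P' else 0) \<noteq> 0" using lookup_img[OF e(1)] by simp
    have "\<exists>P'\<in>Q. (if e \<in> kap P' then Poly_Mapping.lookup m P' else 0) \<noteq> 0"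
    proof (rule ccontr)
      assume "\<not> ?thesis"
      then have "\<forall>P'\<in>Q. (if e \<in> kap P' then Poly_Mapping.lookup m P' else 0) = 0" by blast
      then show False using ne0 by simp
    qed
    then obtain P' where P': "P' \<in> Q" "(if e \<in> kap P' then Poly_Mapping.lookup m P' else 0) \<noteq> 0"
      by blast
    then have "e \<in> kap P'" "P' \<in> Poly_Mapping.keys m" by (auto simp: in_keys_iff split: if_splits)
    then show "e \<in> kap P" using sub by blast
  qed
  then show ?thesis using P(1) by blast
qed

lemma chain_sub: "chain m \<Longrightarrow> Poly_Mapping.keys m' \<subseteq> Poly_Mapping.keys m \<Longrightarrow> chain m'"
  unfolding chain_def by blast

lemma chain_unique:
  "\<And>m m'. Poly_Mapping.keys m \<subseteq> Q \<Longrightarrow> Poly_Mapping.keys m' \<subseteq> Q \<Longrightarrow> chain m \<Longrightarrow> chain m' \<Longrightarrow>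
     img m = img m' \<Longrightarrow> deg m = d \<Longrightarrow> m = m'"
proof (induction d)
  case 0
  obtain e where e: "e \<in> E" using E_ne by blast
  have "deg m' = 0" using deg_img[OF e, of m] deg_img[OF e, of m'] 0 by simp
  then show ?case using deg_zero[OF 0(1) 0(6)] deg_zero[OF 0(2)] 0(2) by simp
next
  case (Suc d)
  obtain e0 where e0: "e0 \<in> E" using E_ne by blast
  have dm': "deg m' = Suc d" using deg_img[OF e0, of m] deg_img[OF e0, of m'] Suc.prems by simp
  have "m \<noteq> 0" using Suc.prems(6) by (auto simp: deg_def)
  then obtain P where P: "P \<in> Poly_Mapping.keys m" "\<forall>e\<in>E. (e \<in> kap P \<longleftrightarrow> Poly_Mapping.lookup (img m) (e, True) > 0)"
    using chain_top[OF Suc.prems(1,3)] by blast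
  have "m' \<noteq> 0" using dm' by (auto simp: deg_def)
  then obtain P' where P': "P' \<in> Poly_Mapping.keys m'" "\<forall>e\<in>E. (e \<in> kap P' \<longleftrightarrow> Poly_Mapping.lookup (img m') (e, True) > 0)"
    using chain_top[OF Suc.prems(2,4)] by blast
  have "kap P = kap P'"
  proof (rule set_eqI)
    fix e show "e \<in> kap P \<longleftrightarrow> e \<in> kap P'"
    proof (cases "e \<in> E")
      case True
      then show ?thesis using P(2) P'(2) Suc.prems(5) by simp
    next
      case False
      then show ?thesis using kap_sub by blast
    qed
  qed
  moreover have "P \<in> Q" "P' \<in> Q" using P(1) P'(1) Suc.prems(1,2) by blast+
  ultimately have PP: "P = P'" using kap_inj by blast
  have PQ: "P \<in> Q" using P(1) Suc.prems(1) by blast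
  define m1 where "m1 = m - Poly_Mapping.single P 1"
  define m1' where "m1' = m' - Poly_Mapping.single P 1"
  have le1: "Poly_Mapping.lookup (Poly_Mapping.single P 1) k \<le> Poly_Mapping.lookup m k" for k
    using P(1) by (auto simp: lookup_single when_def in_keys_iff)
  have le2: "Poly_Mapping.lookup (Poly_Mapping.single P 1) k \<le> Poly_Mapping.lookup m' k" for k
    using P'(1) PP by (auto simp: lookup_single when_def in_keys_iff)
  have mdec: "m = Poly_Mapping.single P 1 + m1" unfolding m1_def by (rule decomp_monom) (rule le1)
  have mdec': "m' = Poly_Mapping.single P 1 + m1'" unfolding m1'_def by (rule decomp_monom) (rule le2)
  have k1: "Poly_Mapping.keys m1 \<subseteq> Q" "Poly_Mapping.keys m1' \<subseteq> Q"
    using order_trans[OF keys_minus_sub] Suc.prems(1,2) unfolding m1_def m1'_def by blast+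
  have c1: "chain m1" "chain m1'"
    unfolding m1_def m1'_def by (rule chain_sub[OF Suc.prems(3) keys_minus_sub], rule chain_sub[OF Suc.prems(4) keys_minus_sub])
  have "img m = img (Poly_Mapping.single P 1) + img m1" by (subst mdec) (rule img_add)
  moreover have "img m' = img (Poly_Mapping.single P 1) + img m1'" by (subst mdec') (rule img_add)
  ultimately have "img (Poly_Mapping.single P 1) + img m1 = img (Poly_Mapping.single P 1) + img m1'"
    using Suc.prems(5) by simp
  then have i1: "img m1 = img m1'" by simp
  have "deg m = 1 + deg m1" by (subst mdec) (simp only: deg_add deg_single[OF PQ])
  then have "deg m1 = d" using Suc.prems(6) by simp
  then have "m1 = m1'" using Suc.IH k1 c1 i1 by blast
  then show ?case using mdec mdec' by simp
qed

lemma swap_img: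
  assumes "kap R = kap P \<inter> kap P'" "kap R' = kap P \<union> kap P'"
  shows "sgv P 1 + sgv P' 1 = sgv R 1 + sgv R' 1"
proof -
  have "\<And>e. Poly_Mapping.single (e, e \<in> kap P) (1::nat) + Poly_Mapping.single (e, e \<in> kap P') 1 =
             Poly_Mapping.single (e, e \<in> kap R) 1 + Poly_Mapping.single (e, e \<in> kap R') 1"
    using assms by (case_tac "e \<in> kap P"; case_tac "e \<in> kap P'") (simp_all add: add.commute)
  then show ?thesis unfolding sgv_def sum.distrib[symmetric] by simp
qed

end




lemma wt_ineq:
  fixes X Y :: "'b set" and N :: int
  assumes fin: "finite X" "finite Y" and inc: "\<not> X \<subseteq> Y" "\<not> Y \<subseteq> X"
  defines "f \<equiv> \<lambda>k::int. k * (N - k)"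
  shows "f (int (card (X \<inter> Y))) + f (int (card (X \<union> Y))) < f (int (card X)) + f (int (card Y))"
proof -
  define a where "a = int (card (X \<inter> Y))"
  define p where "p = int (card X)"
  define q where "q = int (card Y)"
  have "card (X \<union> Y) + card (X \<inter> Y) = card X + card Y" using card_Un_Int[OF fin] by simp
  then have s: "int (card (X \<union> Y)) = p + q - a" unfolding a_def p_def q_def by linarith
  have "card (X \<inter> Y) < card X" using inc fin by (intro psubset_card_mono) auto
  then have ap: "a < p" unfolding a_def p_def by simp
  have "card (X \<inter> Y) < card Y" using inc fin by (intro psubset_card_mono) auto
  then have aq: "a < q" unfolding a_def q_def by simp
  have eq: "f p + f q - f a - f (p + q - a) = 2 * ((p - a) * (q - a))"
    unfolding f_def by (simp add: algebra_simps power2_eq_square)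
  have "0 < (p - a) * (q - a)" using ap aq by (simp add: mult_pos_pos)
  moreover have "f (int (card (X \<union> Y))) = f (p + q - a)" using s by simp
  ultimately show ?thesis using eq unfolding a_def[symmetric] p_def[symmetric] q_def[symmetric] by linarith
qed

lemma keys_monom_diff:
  assumes "u \<noteq> v"
  shows "Poly_Mapping.keys (monom u - monom v :: ('v, 'k::field) mpoly) = {u, v}"
  using assms by (auto simp: monom_def in_keys_iff lookup_minus lookup_single when_def split: if_splits)

lemma lookup_monom_diff:
  "Poly_Mapping.lookup (monom u - monom v :: ('v, 'k::field) mpoly) m = (if m = u then 1 else 0) - (if m = v then 1 else 0)"
  by (auto simp: monom_def lookup_minus lookup_single when_def)

context tree_ctx
begin

definition wt :: "'a set set \<Rightarrow> int" where
  "wt P = int (card (kap P)) * (int (card E) - int (card (kap P)))"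

definition hh :: "nat \<Rightarrow> 'a set set" where
  "hh = (SOME h. bij_betw h {0..<card Q} Q)"

lemma hh_bij: "bij_betw hh {0..<card Q} Q"
  unfolding hh_def using someI_ex[OF ex_bij_betw_nat_finite[OF finQ]] .

abbreviation "W \<equiv> Wt Q hh (card Q) wt"
abbreviation "le \<equiv> wle W"

lemma order: "monomial_order_on Q le"
  by (rule Wt_order[OF finQ hh_bij])

abbreviation "M \<equiv> {m :: 'a set set \<Rightarrow>\<^sub>0 nat. Poly_Mapping.keys m \<subseteq> Q}"

lemma le_total: "a \<in> M \<Longrightarrow> b \<in> M \<Longrightarrow> le a b \<or> le b a"
  using order unfolding monomial_order_on_def Let_def by blast

lemma le_wf: "wf {(a, b). a \<in> M \<and> b \<in> M \<and> le a b \<and> a \<noteq> b}"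
  using order unfolding monomial_order_on_def Let_def by blast

lemma W_single:
  assumes "P \<in> Q"
  shows "W 0 (Poly_Mapping.single P 1) = 1" "W 1 (Poly_Mapping.single P 1) = wt P"
proof -
  have "W 0 (Poly_Mapping.single P 1) = (\<Sum>q\<in>Q. if q = P then 1 else 0)"
    unfolding Wt_def by (simp, rule sum.cong) (auto simp: lookup_single when_def)
  also have "\<dots> = 1" using assms finQ by simp
  finally show "W 0 (Poly_Mapping.single P 1) = 1" .
  have "W 1 (Poly_Mapping.single P 1) = (\<Sum>q\<in>Q. if q = P then wt P else 0)"
    unfolding Wt_def by (simp, rule sum.cong) (auto simp: lookup_single when_def)
  also have "\<dots> = wt P" using assms finQ by simp
  finally show "W 1 (Poly_Mapping.single P 1) = wt P" .
qed

definition uu :: "'a set set \<Rightarrow> 'a set set \<Rightarrow> ('a set set \<Rightarrow>\<^sub>0 nat)" where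
  "uu P P' = Poly_Mapping.single P 1 + Poly_Mapping.single P' 1"

definition swapset where
  "swapset = {(P, P', R, R'). P \<in> Q \<and> P' \<in> Q \<and> R \<in> Q \<and> R' \<in> Q \<and> \<not> kap P \<subseteq> kap P' \<and> \<not> kap P' \<subseteq> kap P \<and>
      kap R = kap P \<inter> kap P' \<and> kap R' = kap P \<union> kap P'}"

lemma swap_less:
  assumes "(P, P', R, R') \<in> swapset"
  shows "le (uu R R') (uu P P') \<and> uu R R' \<noteq> uu P P'"
proof (rule wle_strictI[of 1])
  have Q: "P \<in> Q" "P' \<in> Q" "R \<in> Q" "R' \<in> Q" using assms unfolding swapset_def by auto
  show "\<forall>j<1. W j (uu R R') = W j (uu P P')"
  proof (intro allI impI)
    fix j :: nat assume "j < 1"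
    then have j: "j = 0" by simp
    show "W j (uu R R') = W j (uu P P')"
      unfolding j uu_def by (simp only: Wt_add W_single(1)[OF Q(1)] W_single(1)[OF Q(2)] W_single(1)[OF Q(3)] W_single(1)[OF Q(4)])
  qed
  have f: "finite (kap P)" "finite (kap P')" by (rule finite_subset[OF kap_sub finE])+
  have sw: "\<not> kap P \<subseteq> kap P'" "\<not> kap P' \<subseteq> kap P" "kap R = kap P \<inter> kap P'" "kap R' = kap P \<union> kap P'"
    using assms unfolding swapset_def by auto
  have "wt R + wt R' < wt P + wt P'"
    unfolding wt_def sw(3,4) using wt_ineq[OF f sw(1,2), of "int (card E)"] by simp
  then show "W 1 (uu R R') < W 1 (uu P P')"
    unfolding uu_def by (simp only: Wt_add W_single(2)[OF Q(1)] W_single(2)[OF Q(2)] W_single(2)[OF Q(3)] W_single(2)[OF Q(4)])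
qed

lemma swap_distinct:
  assumes "(P, P', R, R') \<in> swapset"
  shows "P \<noteq> P'" "R \<noteq> R'"
proof -
  show "P \<noteq> P'" using assms unfolding swapset_def by auto
  have "kap R \<noteq> kap R'" using assms unfolding swapset_def by auto
  then show "R \<noteq> R'" by auto
qed

lemma uu_keys: "Poly_Mapping.keys (uu P P') \<subseteq> {P, P'}"
  unfolding uu_def by (rule keys_two)

lemma uu_lookup: "P \<noteq> P' \<Longrightarrow> Poly_Mapping.lookup (uu P P') k = (if k = P \<or> k = P' then 1 else 0)"
  unfolding uu_def by (auto simp: lookup_add lookup_single when_def)

lemma uu_sqfree: "P \<noteq> P' \<Longrightarrow> squarefree_monomial (uu P P')"
  unfolding squarefree_monomial_def using uu_lookup by simp

lemma uu_degree: "P \<noteq> P' \<Longrightarrow> monomial_degree (uu P P') = 2"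
proof -
  assume ne: "P \<noteq> P'"
  have "Poly_Mapping.keys (uu P P') = {P, P'}" by (rule set_eqI) (simp add: in_keys_iff uu_lookup[OF ne])
  then show ?thesis unfolding monomial_degree_def using uu_lookup[OF ne] ne by simp
qed

lemma img_uu: "P \<in> Q \<Longrightarrow> P' \<in> Q \<Longrightarrow> img (uu P P') = sgv P 1 + sgv P' 1"
  unfolding uu_def by (simp only: img_add img_single)

lemma swap_img_eq:
  assumes "(P, P', R, R') \<in> swapset"
  shows "img (uu R R') = img (uu P P')"
  using assms swap_img[of R P P' R'] unfolding swapset_def by (auto simp: img_uu)

lemma M_uu: "P \<in> Q \<Longrightarrow> P' \<in> Q \<Longrightarrow> uu P P' \<in> M"
  using uu_keys by blast

definition gb :: "'a set set \<times> 'a set set \<times> 'a set set \<times> 'a set set \<Rightarrow> ('a set set, 'k::field) mpoly" where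
  "gb x = (case x of (P, P', R, R') \<Rightarrow> monom (uu P P') - monom (uu R R'))"

lemma gb_lead:
  assumes "(P, P', R, R') \<in> swapset"
  shows "lead_monom le (gb (P, P', R, R') :: ('a set set, 'k::field) mpoly) = uu P P'"
proof -
  have ne: "uu P P' \<noteq> uu R R'" using swap_less[OF assms] by (metis (no_types))
  have keys: "Poly_Mapping.keys (gb (P, P', R, R') :: ('a set set, 'k) mpoly) = {uu P P', uu R R'}"
    unfolding gb_def using keys_monom_diff[OF ne] by simp
  have lt: "le (uu R R') (uu P P')" using swap_less[OF assms] by simp
  show ?thesis
    unfolding lead_monom_def keys
  proof (rule the_equality)
    show "uu P P' \<in> {uu P P', uu R R'} \<and> (\<forall>m'\<in>{uu P P', uu R R'}. le m' (uu P P'))"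
      using lt wle_refl by auto
    fix m assume m: "m \<in> {uu P P', uu R R'} \<and> (\<forall>m'\<in>{uu P P', uu R R'}. le m' m)"
    show "m = uu P P'"
    proof (cases "m = uu P P'")
      case False
      then have "m = uu R R'" using m by blast
      then have "le (uu P P') (uu R R')" using m by blast
      then show ?thesis using wle_antisym lt ne by blast
    qed
  qed
qed

definition GB :: "('a set set, 'k::field) mpoly set" where
  "GB = gb ` swapset"

lemma finite_swapset: "finite swapset"
proof -
  have "swapset \<subseteq> Q \<times> Q \<times> Q \<times> Q" unfolding swapset_def by auto
  then show ?thesis using finQ by (meson finite_SigmaI finite_subset)
qed

lemma finite_GB: "finite GB" unfolding GB_def using finite_swapset by simp

lemma gb_in_ideal:
  assumes "x \<in> swapset"
  shows "(gb x :: ('a set set, 'k::field) mpoly) \<in> cut_ideal V E"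
proof -
  obtain P P' R R' where x: "x = (P, P', R, R')" by (cases x) auto
  have sw: "(P, P', R, R') \<in> swapset" using assms x by simp
  have Q: "P \<in> Q" "P' \<in> Q" "R \<in> Q" "R' \<in> Q" using sw unfolding swapset_def by auto
  have ne: "uu P P' \<noteq> uu R R'" using swap_less[OF sw] by (metis (no_types))
  let ?g = "monom (uu P P') - monom (uu R R') :: ('a set set, 'k) mpoly"
  have keys: "Poly_Mapping.keys ?g = {uu P P', uu R R'}" using keys_monom_diff[OF ne] .
  have "?g \<in> poly_ring Q"
    unfolding poly_ring_def mem_Collect_eq keys
  proof
    fix m assume "m \<in> {uu P P', uu R R'}"
    then show "Poly_Mapping.keys m \<subseteq> Q" using M_uu[OF Q(1,2)] M_uu[OF Q(3,4)] by auto
  qed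
  moreover have "cut_hom E ?g = 0"
  proof -
    have i1: "img0 E (uu P P') = img (uu P P')" using img0_img[of "uu P P'"] M_uu[OF Q(1,2)] by simp
    have i2: "img0 E (uu R R') = img (uu R R')" using img0_img[of "uu R R'"] M_uu[OF Q(3,4)] by simp
    have "cut_hom E ?g = (\<Sum>m\<in>{uu P P', uu R R'}. Poly_Mapping.single (img0 E m) (Poly_Mapping.lookup ?g m))"
      by (rule cut_hom_superset) (auto simp: keys)
    also have "\<dots> = Poly_Mapping.single (img0 E (uu P P')) (Poly_Mapping.lookup ?g (uu P P')) + Poly_Mapping.single (img0 E (uu R R')) (Poly_Mapping.lookup ?g (uu R R'))"
      using ne by simp
    also have "\<dots> = Poly_Mapping.single (img (uu P P')) 1 + Poly_Mapping.single (img (uu R R')) (- 1)"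
      unfolding i1 i2 lookup_monom_diff using ne by simp
    also have "\<dots> = 0" using swap_img_eq[OF sw] by (simp add: single_add[symmetric])
    finally show ?thesis .
  qed
  ultimately show ?thesis unfolding cut_ideal_def gb_def x by simp
qed

lemma nonchain_split:
  assumes "Poly_Mapping.keys m \<subseteq> Q" "\<not> chain m"
  shows "\<exists>P P' R R'. (P, P', R, R') \<in> swapset \<and> m = uu P P' + (m - uu P P')"
proof -
  obtain P P' where P: "P \<in> Poly_Mapping.keys m" "P' \<in> Poly_Mapping.keys m" "\<not> kap P \<subseteq> kap P'" "\<not> kap P' \<subseteq> kap P"
    using assms(2) unfolding chain_def by blast
  obtain R where R: "R \<in> Q" "kap R = kap P \<inter> kap P'" using kap_surj[of "kap P \<inter> kap P'"] kap_sub by blast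
  obtain R' where R': "R' \<in> Q" "kap R' = kap P \<union> kap P'" using kap_surj[of "kap P \<union> kap P'"] kap_sub by blast
  have sw: "(P, P', R, R') \<in> swapset" unfolding swapset_def using P R R' assms(1) by blast
  have ne: "P \<noteq> P'" using P by blast
  have "m = uu P P' + (m - uu P P')"
  proof (rule decomp_monom)
    fix k show "Poly_Mapping.lookup (uu P P') k \<le> Poly_Mapping.lookup m k"
      using P(1,2) uu_lookup[OF ne, of k] by (auto simp: in_keys_iff)
  qed
  then show ?thesis using sw by blast
qed

lemma chain_min:
  assumes mQ: "Poly_Mapping.keys m \<subseteq> Q" and ch: "chain m"
  shows "Poly_Mapping.keys m' \<subseteq> Q \<Longrightarrow> img m' = img m \<Longrightarrow> le m m'"
proof (induction m' rule: wf_induct_rule[OF le_wf])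
  case (1 m')
  show ?case
  proof (cases "chain m'")
    case True
    then have "m' = m" using chain_unique[OF "1.prems"(1) mQ True ch "1.prems"(2)] by blast
    then show ?thesis by (simp add: wle_refl)
  next
    case False
    then obtain P P' R R' where sw: "(P, P', R, R') \<in> swapset" and dec: "m' = uu P P' + (m' - uu P P')"
      using nonchain_split[OF "1.prems"(1)] by blast
    define c where "c = m' - uu P P'"
    define m'' where "m'' = uu R R' + c"
    have mc: "m' = uu P P' + c" using dec unfolding c_def .
    have Q: "R \<in> Q" "R' \<in> Q" using sw unfolding swapset_def by auto
    have cQ: "Poly_Mapping.keys c \<subseteq> Q" unfolding c_def using order_trans[OF keys_minus_sub "1.prems"(1)] .
    have m''Q: "Poly_Mapping.keys m'' \<subseteq> Q"
      unfolding m''_def using keys_add[of "uu R R'" c] M_uu[OF Q] cQ by auto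
    have "img m'' = img (uu R R') + img c" unfolding m''_def by (rule img_add)
    also have "\<dots> = img (uu P P') + img c" using swap_img_eq[OF sw] by simp
    also have "\<dots> = img m'" by (simp only: mc img_add)
    finally have im: "img m'' = img m" using "1.prems"(2) by simp
    have lt: "le (uu R R') (uu P P')" "uu R R' \<noteq> uu P P'" using swap_less[OF sw] by auto
    have add: "\<And>i x y. W i (x + y) = W i x + W i y" by (rule Wt_add)
    have "le m'' m'" unfolding m''_def by (subst mc) (rule wle_add[OF add lt(1)])
    moreover have "m'' \<noteq> m'" unfolding m''_def by (subst mc) (use lt(2) in simp)
    ultimately have "(m'', m') \<in> {(a, b). a \<in> M \<and> b \<in> M \<and> le a b \<and> a \<noteq> b}"
      using m''Q "1.prems"(1) by blast
    then have "le m m''" using "1.IH" m''Q im by blast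
    then show ?thesis using \<open>le m'' m'\<close> wle_trans by blast
  qed
qed

end




context tree_ctx
begin

lemma lead_max:
  assumes "f \<in> poly_ring Q" "f \<noteq> 0"
  shows "lead_monom le f \<in> Poly_Mapping.keys f \<and> (\<forall>m'\<in>Poly_Mapping.keys f. le m' (lead_monom le f))"
proof -
  have KM: "Poly_Mapping.keys f \<subseteq> M" using assms(1) unfolding poly_ring_def by blast
  have "\<exists>m\<in>Poly_Mapping.keys f. \<forall>m'\<in>Poly_Mapping.keys f. le m' m"
  proof (rule finite_max_rel)
    show "finite (Poly_Mapping.keys f)" by simp
    show "Poly_Mapping.keys f \<noteq> {}" using assms(2) by simp
    show "\<And>a b. a \<in> Poly_Mapping.keys f \<Longrightarrow> b \<in> Poly_Mapping.keys f \<Longrightarrow> le a b \<or> le b a"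
      using le_total KM by (meson subsetD)
    show "\<And>a b c. le a b \<Longrightarrow> le b c \<Longrightarrow> le a c" by (rule wle_trans)
    show "\<And>a. le a a" by (rule wle_refl)
  qed
  then obtain m where m: "m \<in> Poly_Mapping.keys f" "\<forall>m'\<in>Poly_Mapping.keys f. le m' m" by blast
  have "lead_monom le f = m"
    unfolding lead_monom_def
  proof (rule the_equality)
    show "m \<in> Poly_Mapping.keys f \<and> (\<forall>m'\<in>Poly_Mapping.keys f. le m' m)" using m by blast
    fix x assume x: "x \<in> Poly_Mapping.keys f \<and> (\<forall>m'\<in>Poly_Mapping.keys f. le m' x)"
    then have "le m x" "le x m" using m by blast+
    then show "x = m" using wle_antisym[of W x m] by blast
  qed
  then show ?thesis using m by simp
qed

lemma lead_reducible:
  assumes f: "(f :: ('a set set, 'k::field) mpoly) \<in> cut_ideal V E" and nz: "f \<noteq> 0"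
  shows "\<exists>P P' R R' c. (P, P', R, R') \<in> swapset \<and> lead_monom le f = uu P P' + c"
proof -
  have fQ: "f \<in> poly_ring Q" and f0: "cut_hom E f = 0" using f unfolding cut_ideal_def by auto
  define m where "m = lead_monom le f"
  have m: "m \<in> Poly_Mapping.keys f" "\<forall>m'\<in>Poly_Mapping.keys f. le m' m"
    using lead_max[OF fQ nz] unfolding m_def by blast+
  have mQ: "Poly_Mapping.keys m \<subseteq> Q" using fQ m(1) unfolding poly_ring_def by blast
  show ?thesis
  proof (cases "chain m")
    case False
    then show ?thesis using nonchain_split[OF mQ] unfolding m_def by blast
  next
    case True
    have eqc: "(if img0 E m' = img0 E m then Poly_Mapping.lookup f m' else 0) = (if m' = m then Poly_Mapping.lookup f m' else 0)"
      if m': "m' \<in> Poly_Mapping.keys f" for m'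
    proof (cases "img0 E m' = img0 E m")
      case True
      have m'Q: "Poly_Mapping.keys m' \<subseteq> Q" using fQ m' unfolding poly_ring_def by blast
      have "img m' = img m" using True img0_img[OF m'Q] img0_img[OF mQ] by simp
      then have "le m m'" using chain_min[OF mQ \<open>chain m\<close> m'Q] by blast
      moreover have "le m' m" using m(2) m' by blast
      ultimately have "m' = m" by (rule wle_antisym[rotated])
      then show ?thesis by simp
    next
      case False
      then have "m' \<noteq> m" by blast
      then show ?thesis using False by simp
    qed
    have "Poly_Mapping.lookup (cut_hom E f) (img0 E m) = (\<Sum>m'\<in>Poly_Mapping.keys f. if m' = m then Poly_Mapping.lookup f m' else 0)"
      unfolding lookup_cut_hom by (rule sum.cong) (simp_all add: eqc)
    also have "\<dots> = Poly_Mapping.lookup f m" using m(1) by simp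
    finally have "Poly_Mapping.lookup f m = 0" using f0 by simp
    then show ?thesis using m(1) by (simp add: in_keys_iff)
  qed
qed

lemma gb_nonzero: "x \<in> swapset \<Longrightarrow> (gb x :: ('a set set, 'k::field) mpoly) \<noteq> 0"
proof -
  assume x: "x \<in> swapset"
  obtain P P' R R' where xx: "x = (P, P', R, R')" by (cases x) auto
  have sw: "(P, P', R, R') \<in> swapset" using x xx by simp
  have ne: "uu P P' \<noteq> uu R R'" using swap_less[OF sw] by (metis (no_types))
  have "Poly_Mapping.keys (gb x :: ('a set set, 'k) mpoly) = {uu P P', uu R R'}"
    unfolding xx gb_def using keys_monom_diff[OF ne] by simp
  then show ?thesis by auto
qed

theorem main:
  "\<exists>le G. monomial_order_on Q le \<and>
           groebner_basis le G (cut_ideal V E :: ('a set set, 'k::field) mpoly set) \<and>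
           quadratic_squarefree_binomials G \<and>
           squarefree_monomial_ideal (initial_ideal le (cut_ideal V E :: ('a set set, 'k) mpoly set))"
proof (intro exI conjI)
  let ?I = "cut_ideal V E :: ('a set set, 'k) mpoly set"
  let ?G = "GB :: ('a set set, 'k) mpoly set"
  let ?L = "{monom (lead_monom le g) | g. g \<in> ?G \<and> g \<noteq> 0}"
  let ?T = "{monom (lead_monom le f) | f. f \<in> ?I \<and> f \<noteq> 0}"
  show "monomial_order_on Q le" by (rule order)
  have GI: "?G \<subseteq> ?I" unfolding GB_def using gb_in_ideal by blast
  have "?L \<subseteq> ?T" using GI by blast
  then have 1: "ideal_gen ?L \<subseteq> ideal_gen ?T" by (rule ideal_gen_mono)
  have "?T \<subseteq> ideal_gen ?L"
  proof
    fix t assume "t \<in> ?T"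
    then obtain f where f: "t = monom (lead_monom le f)" "f \<in> ?I" "f \<noteq> 0" by blast
    obtain P P' R R' c where sw: "(P, P', R, R') \<in> swapset" and l: "lead_monom le f = uu P P' + c"
      using lead_reducible[OF f(2,3)] by blast
    have "gb (P, P', R, R') \<in> ?G" unfolding GB_def using sw by blast
    moreover have "(gb (P, P', R, R') :: ('a set set, 'k) mpoly) \<noteq> 0" using gb_nonzero[OF sw] .
    moreover have "lead_monom le (gb (P, P', R, R') :: ('a set set, 'k) mpoly) = uu P P'" using gb_lead[OF sw] .
    ultimately have mem: "monom (uu P P') \<in> ?L" by (metis (mono_tags, lifting) mem_Collect_eq)
    have tt: "t = monom c * monom (uu P P')" unfolding f(1) l by (simp add: monom_add mult.commute)
    show "t \<in> ideal_gen ?L" unfolding tt by (rule ideal_gen_base[OF mem])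
  qed
  then have 2: "ideal_gen ?T \<subseteq> ideal_gen ?L" by (rule ideal_gen_subset)
  have eq: "ideal_gen ?L = initial_ideal le ?I" unfolding initial_ideal_def using 1 2 by blast
  show "groebner_basis le ?G ?I"
    unfolding groebner_basis_def using finite_GB GI eq by blast
  show "quadratic_squarefree_binomials ?G"
    unfolding quadratic_squarefree_binomials_def
  proof
    fix g assume "g \<in> ?G"
    then obtain P P' R R' where sw: "(P, P', R, R') \<in> swapset" and g: "g = gb (P, P', R, R')"
      unfolding GB_def by auto
    have ne: "uu P P' \<noteq> uu R R'" using swap_less[OF sw] by (metis (no_types))
    have d: "P \<noteq> P'" "R \<noteq> R'" using swap_distinct[OF sw] by auto
    show "\<exists>u v. u \<noteq> v \<and> squarefree_monomial u \<and> squarefree_monomial v \<and>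
        monomial_degree u = 2 \<and> monomial_degree v = 2 \<and> g = monom u - monom v"
      using ne uu_sqfree[OF d(1)] uu_sqfree[OF d(2)] uu_degree[OF d(1)] uu_degree[OF d(2)]
      unfolding g gb_def by auto
  qed
  show "squarefree_monomial_ideal (initial_ideal le ?I)"
    unfolding squarefree_monomial_ideal_def
  proof (intro exI conjI)
    let ?S = "{lead_monom le g | g. g \<in> ?G \<and> g \<noteq> 0}"
    show "\<forall>m\<in>?S. squarefree_monomial m"
    proof
      fix m assume "m \<in> ?S"
      then obtain g where g: "m = lead_monom le g" "g \<in> ?G" by blast
      then obtain P P' R R' where sw: "(P, P', R, R') \<in> swapset" and gg: "g = gb (P, P', R, R')"
        unfolding GB_def by auto
      have "m = uu P P'" using g(1) gg gb_lead[OF sw] by simp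
      then show "squarefree_monomial m" using uu_sqfree swap_distinct(1)[OF sw] by simp
    qed
    have im: "monom ` ?S = ?L" by blast
    show "initial_ideal le ?I = ideal_gen (monom ` ?S)" unfolding im using eq by (rule sym)
  qed
qed

end



theorem corollary4p3:
  fixes V :: "'a set" and E :: "'a set set"
  assumes "is_tree V E" and "card E \<ge> 2"
  shows "\<exists>le G. monomial_order_on (unordered_partitions V) le \<and>
           groebner_basis le G (cut_ideal V E :: ('a set set, 'k::field) mpoly set) \<and>
           quadratic_squarefree_binomials G \<and>
           squarefree_monomial_ideal (initial_ideal le (cut_ideal V E :: ('a set set, 'k) mpoly set))"
proof -
  interpret tree_ctx V E using assms by unfold_locales
  show ?thesis by (rule main)
qed

end
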